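(* In the setup below, every element $R(i;j,k\,|\,l;m,n)$ (with $i\neq l$) and every element $T(i,j\,|\,k,l\,|\,m,n)$ (with $i,k,m$ pairwise distinct) lies in $K_2^T(C)$.
   Context: Let $K$ be a field, $N\ge2$, $N_1,\dots,N_N\ge1$. For $1\le i\le N$, $1\le j\le N_i$ let $L_{i,j}=a_ix+b_iy+c_{i,j}$ with $a_i,b_i,c_{i,j}\in K$, $(a_i,b_i)\ne(0,0)$, such that the affine lines $L_{i,j}=0$ are pairwise distinct and $[i,k]:=a_ib_k-a_kb_i\neq0$ for $i\neq k$. For $\lambda\in K^*$ put $f(x,y)=\lambda\prod_{i,j}L_{i,j}-1$; the affine curve $f=0$ is irreducible. Let $C'\subset\mathbb P^2_K$ be its projective closure, $C$ the normalisation of $C'$ (a regular proper irreducible curve), and $F$ its function field; the $L_{i,j}$ are regarded as elements of $F^*$. $K_2(F)$ is the abelian group generated by symbols $\{a,b\}$, $a,b\in F^*$, with relations $\{a_1a_2,b\}=\{a_1,b\}+\{a_2,b\}$, $\{a,b_1b_2\}=\{a,b_1\}+\{a,b_2\}$, $\{a,1-a\}=0$ for $a\neq0,1$. For a closed point $x$ of $C$ with residue field $k(x)$, the tame symbol is $T_x(\{a,b\})=(-1)^{\mathrm{ord}_x(a)\mathrm{ord}_x(b)}\bigl(a^{\mathrm{ord}_x(b)}/b^{\mathrm{ord}_x(a)}\bigr)(x)\in k(x)^*$, and $K_2^T(C)$ is the kernel of $\bigoplus_x T_x:K_2(F)\to\bigoplus_x k(x)^*$. Define $R(i;j,k\,|\,l;m,n)=\{L_{i,j}/L_{i,k},\,L_{l,m}/L_{l,n}\}$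 for $i\ne l$, and $T(i,j\,|\,k,l\,|\,m,n)=\Bigl\{\frac{[i,m]}{[k,m]}\frac{L_{k,l}}{L_{i,j}},\,\frac{[i,k]}{[m,k]}\frac{L_{m,n}}{L_{i,j}}\Bigr\}$ for $i,k,m$ pairwise distinct (second indices in the appropriate ranges). *)

theory Defs
  imports "HOL-Computational_Algebra.Polynomial"
begin

definition subfield :: "'a::field set \<Rightarrow> bool" where
  "subfield S \<longleftrightarrow> 0 \<in> S \<and> 1 \<in> S \<and>
     (\<forall>u\<in>S. \<forall>w\<in>S. u + w \<in> S \<and> u * w \<in> S \<and> u - w \<in> S) \<and>
     (\<forall>u\<in>S. u \<noteq> 0 \<longrightarrow> inverse u \<in> S)"

definition generated_by :: "'a::field set \<Rightarrow> 'a \<Rightarrow> 'a \<Rightarrow> bool" where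
  "generated_by K x y \<longleftrightarrow>
     (\<forall>S. subfield S \<and> K \<subseteq> S \<and> x \<in> S \<and> y \<in> S \<longrightarrow> S = UNIV)"

definition transcendental_over :: "'a::field set \<Rightarrow> 'a \<Rightarrow> bool" where
  "transcendental_over K x \<longleftrightarrow>
     (\<forall>p. p \<noteq> 0 \<and> (\<forall>n. coeff p n \<in> K) \<longrightarrow> poly p x \<noteq> 0)"

text \<open>Normalised discrete valuations of F trivial on K; these are exactly the
  closed points of the regular proper curve C with function field F.
  (The value at 0 is irrelevant and never used.)\<close>
definition discrete_valuation :: "'a::field set \<Rightarrow> ('a \<Rightarrow> int) \<Rightarrow> bool" where
  "discrete_valuation K v \<longleftrightarrow>
     v ` (UNIV - {0}) = UNIV \<and>
     (\<forall>a b. a \<noteq> 0 \<and> b \<noteq> 0 \<longrightarrow> v (a * b) = v a + v b) \<and>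
     (\<forall>a b. a \<noteq> 0 \<and> b \<noteq> 0 \<and> a + b \<noteq> 0 \<longrightarrow> v (a + b) \<ge> min (v a) (v b)) \<and>
     (\<forall>c\<in>K. c \<noteq> 0 \<longrightarrow> v c = 0)"

text \<open>The element (-1)^(v a v b) a^(v b) / b^(v a), a unit of the valuation ring,
  whose residue class is the tame symbol.\<close>
definition tame_elt :: "('a::field \<Rightarrow> int) \<Rightarrow> 'a \<Rightarrow> 'a \<Rightarrow> 'a" where
  "tame_elt v a b = (-1) powi (v a * v b) * a powi (v b) / b powi (v a)"

text \<open>The tame symbol at v of {a,b} is trivial, i.e. the residue of tame_elt is 1
  in the residue field k(v): the element minus 1 lies in the maximal ideal.\<close>
definition tame_trivial :: "('a::field \<Rightarrow> int) \<Rightarrow> 'a \<Rightarrow> 'a \<Rightarrow> bool" where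
  "tame_trivial v a b \<longleftrightarrow>
     tame_elt v a b = 1 \<or> (tame_elt v a b \<noteq> 1 \<and> v (tame_elt v a b - 1) > 0)"

definition symbol_in_K2T :: "'a::field set \<Rightarrow> 'a \<Rightarrow> 'a \<Rightarrow> bool" where
  "symbol_in_K2T K a b \<longleftrightarrow> (\<forall>v. discrete_valuation K v \<longrightarrow> tame_trivial v a b)"

end

theory Submission
  imports Defs
begin


lemma sK_add: "subfield K \<Longrightarrow> u \<in> K \<Longrightarrow> w \<in> K \<Longrightarrow> u + w \<in> K"
  and sK_mult: "subfield K \<Longrightarrow> u \<in> K \<Longrightarrow> w \<in> K \<Longrightarrow> u * w \<in> K"
  and sK_diff: "subfield K \<Longrightarrow> u \<in> K \<Longrightarrow> w \<in> K \<Longrightarrow> u - w \<in> K"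
  unfolding subfield_def by blast+

lemma sK_div: "subfield K \<Longrightarrow> u \<in> K \<Longrightarrow> w \<in> K \<Longrightarrow> u / w \<in> K"
proof -
  assume K: "subfield K" "u \<in> K" "w \<in> K"
  show ?thesis
  proof (cases "w = 0")
    case True then show ?thesis using K unfolding subfield_def by simp
  next
    case False
    then have "inverse w \<in> K" using K unfolding subfield_def by blast
    then show ?thesis using K sK_mult by (simp add: divide_inverse)
  qed
qed

locale dv =
  fixes K :: "'a::field set" and v :: "'a \<Rightarrow> int"
  assumes dv: "discrete_valuation K v"
begin

lemma vmult: "a \<noteq> 0 \<Longrightarrow> b \<noteq> 0 \<Longrightarrow> v (a*b) = v a + v b"
  using dv unfolding discrete_valuation_def by blast

lemma vultra: "a \<noteq> 0 \<Longrightarrow> b \<noteq> 0 \<Longrightarrow> a+b \<noteq> 0 \<Longrightarrow> min (v a) (v b) \<le> v (a+b)"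
  using dv unfolding discrete_valuation_def by blast

lemma vK: "c \<in> K \<Longrightarrow> c \<noteq> 0 \<Longrightarrow> v c = 0"
  using dv unfolding discrete_valuation_def by blast

lemma v1: "v 1 = 0" using vmult[of 1 1] by simp

lemma vinv: "a \<noteq> 0 \<Longrightarrow> v (inverse a) = - v a"
  using vmult[of a "inverse a"] v1 by simp

lemma vdiv: "a \<noteq> 0 \<Longrightarrow> b \<noteq> 0 \<Longrightarrow> v (a/b) = v a - v b"
  by (simp add: divide_inverse vmult vinv)

lemma vm1: "v (-1) = 0" using vmult[of "-1" "-1"] v1 by simp

lemma vneg: "a \<noteq> 0 \<Longrightarrow> v (-a) = v a"
  using vmult[of "-1" a] vm1 by simp

lemma v_prod: "finite S \<Longrightarrow> (\<forall>s\<in>S. f s \<noteq> 0) \<Longrightarrow> v (prod f S) = (\<Sum>s\<in>S. v (f s))"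
proof (induction S rule: finite_induct)
  case empty then show ?case by (simp add: v1)
next
  case (insert x F)
  then show ?case by (simp add: vmult prod_zero_iff)
qed

definition VG :: "int \<Rightarrow> 'a \<Rightarrow> bool" where "VG s z \<longleftrightarrow> z = 0 \<or> s \<le> v z"

lemma VG_add: "VG s a \<Longrightarrow> VG s b \<Longrightarrow> VG s (a+b)"
  unfolding VG_def using vultra[of a b] by fastforce

lemma VG_neg: "VG s a \<Longrightarrow> VG s (-a)"
  unfolding VG_def using vneg by (cases "a = 0") auto

lemma VG_diff: "VG s a \<Longrightarrow> VG s b \<Longrightarrow> VG s (a-b)"
  using VG_add[of s a "-b"] VG_neg by simp

lemma VG_mult: "VG s a \<Longrightarrow> VG r b \<Longrightarrow> VG (s+r) (a*b)"
  unfolding VG_def using vmult by (cases "a = 0"; cases "b = 0") auto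

lemma VG_mono: "s' \<le> s \<Longrightarrow> VG s z \<Longrightarrow> VG s' z"
  unfolding VG_def by auto

lemma VG_K: "c \<in> K \<Longrightarrow> VG 0 c"
  unfolding VG_def using vK by (cases "c = 0") auto

lemma VG_v: "VG (v z) z"
  unfolding VG_def by auto

lemma VG_div: "VG s a \<Longrightarrow> b \<noteq> 0 \<Longrightarrow> VG (s - v b) (a/b)"
  unfolding VG_def using vdiv by (cases "a = 0") auto

lemma VG_pos: "z \<noteq> 0 \<Longrightarrow> VG s z \<Longrightarrow> s \<le> v z"
  unfolding VG_def by auto

definition U :: "'a \<Rightarrow> bool" where "U w \<longleftrightarrow> w \<noteq> 0 \<and> VG 1 (w - 1)"

lemma U_one: "U 1" unfolding U_def VG_def by simp

lemma U_VG0: "U w \<Longrightarrow> VG 0 w"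
proof -
  assume "U w"
  then have "VG 0 (w - 1)" unfolding U_def using VG_mono[of 0 1] by simp
  moreover have "VG 0 1" unfolding VG_def using v1 by simp
  ultimately have "VG 0 ((w - 1) + 1)" by (rule VG_add)
  then show ?thesis by simp
qed

lemma U_v0: "U w \<Longrightarrow> v w = 0"
proof -
  assume u: "U w"
  then have w0: "w \<noteq> 0" and g: "VG 1 (w - 1)" unfolding U_def by auto
  have "0 \<le> v w" using U_VG0[OF u] w0 VG_pos by blast
  moreover have "\<not> 0 < v w"
  proof
    assume "0 < v w"
    then have "VG 1 w" unfolding VG_def by auto
    then have "VG 1 (w - (w - 1))" using g VG_diff by blast
    then show False unfolding VG_def using v1 by simp
  qed
  ultimately show ?thesis by simp
qed

lemma U_mult: "U a \<Longrightarrow> U b \<Longrightarrow> U (a*b)"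
proof -
  assume a: "U a" and b: "U b"
  have "VG (0+1) (a * (b - 1))" using VG_mult[OF U_VG0[OF a]] b unfolding U_def by blast
  moreover have "VG 1 (a - 1)" using a unfolding U_def by blast
  ultimately have "VG 1 (a * (b - 1) + (a - 1))" using VG_add by simp
  moreover have "a * (b - 1) + (a - 1) = a * b - 1" by (simp add: algebra_simps)
  ultimately show ?thesis using a b unfolding U_def by simp
qed

lemma U_inv: "U a \<Longrightarrow> U (inverse a)"
proof -
  assume a: "U a"
  then have a0: "a \<noteq> 0" unfolding U_def by simp
  have "VG (1 - v a) (-(a - 1) / a)" using VG_div[OF VG_neg a0] a unfolding U_def by blast
  moreover have "-(a - 1) / a = inverse a - 1" using a0 by (simp add: field_simps)
  ultimately show ?thesis using a0 U_v0[OF a] unfolding U_def by simp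
qed

lemma U_pow: "U a \<Longrightarrow> U (a ^ n)"
  by (induction n) (auto simp: U_one U_mult)

lemma U_powi: "U a \<Longrightarrow> U (a powi n)"
  unfolding power_int_def using U_pow U_inv by (simp add: power_inverse[symmetric])

lemma U_crit: "w \<noteq> 0 \<Longrightarrow> q \<noteq> 0 \<Longrightarrow> w - 1 = p / q \<Longrightarrow> VG s p \<Longrightarrow> v q < s \<Longrightarrow> U w"
proof -
  assume "w \<noteq> 0" "q \<noteq> 0" "w - 1 = p / q" "VG s p" "v q < s"
  then have "VG (s - v q) (w - 1)" using VG_div by simp
  then have "VG 1 (w - 1)" using VG_mono[of 1 "s - v q"] \<open>v q < s\<close> by simp
  then show ?thesis using \<open>w \<noteq> 0\<close> unfolding U_def by simp
qed

lemma U_tame: "U (tame_elt v a b) \<Longrightarrow> tame_trivial v a b"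
  unfolding U_def tame_trivial_def VG_def by auto

lemma R_lemma:
  assumes nz: "A1 \<noteq> 0" "A2 \<noteq> 0" "B1 \<noteq> 0" "B2 \<noteq> 0"
    and dA: "A1 - A2 \<in> K" and dB: "B1 - B2 \<in> K"
    and cs: "(v A1 = 0 \<and> v A2 = 0 \<and> v B1 = 0 \<and> v B2 = 0) \<or>
             (\<exists>t<0. (v A1 = t \<and> v A2 = t) \<or> (v B1 = t \<and> v B2 = t))"
  shows "tame_trivial v (A1/A2) (B1/B2)"
proof -
  have vu: "v (A1/A2) = v A1 - v A2" and vw: "v (B1/B2) = v B1 - v B2" using nz vdiv by auto
  from cs show ?thesis
  proof
    assume h: "v A1 = 0 \<and> v A2 = 0 \<and> v B1 = 0 \<and> v B2 = 0"
    then have "tame_elt v (A1/A2) (B1/B2) = 1" unfolding tame_elt_def using vu vw by simp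
    then show ?thesis using U_tame U_one by simp
  next
    assume "\<exists>t<0. (v A1 = t \<and> v A2 = t) \<or> (v B1 = t \<and> v B2 = t)"
    then obtain t where t: "t < 0" and h: "(v A1 = t \<and> v A2 = t) \<or> (v B1 = t \<and> v B2 = t)" by blast
    from h show ?thesis
    proof
      assume h: "v A1 = t \<and> v A2 = t"
      have "A1/A2 - 1 = (A1 - A2) / A2" using nz by (simp add: field_simps)
      then have u: "U (A1/A2)" using U_crit[of "A1/A2" A2 "A1 - A2" 0] VG_K[OF dA] nz h t by simp
      have "tame_elt v (A1/A2) (B1/B2) = (A1/A2) powi (v (B1/B2))"
        unfolding tame_elt_def using vu h by simp
      then show ?thesis using U_tame U_powi[OF u] by simp
    next
      assume h: "v B1 = t \<and> v B2 = t"
      have "B1/B2 - 1 = (B1 - B2) / B2" using nz by (simp add: field_simps)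
      then have u: "U (B1/B2)" using U_crit[of "B1/B2" B2 "B1 - B2" 0] VG_K[OF dB] nz h t by simp
      have "tame_elt v (A1/A2) (B1/B2) = inverse ((B1/B2) powi (v (A1/A2)))"
        unfolding tame_elt_def using vw h by (simp add: divide_inverse)
      then show ?thesis using U_tame U_inv[OF U_powi[OF u]] by simp
    qed
  qed
qed

lemma T_lemma:
  assumes nz: "A \<noteq> 0" "B \<noteq> 0" "C \<noteq> 0"
    and al: "al \<in> K" "al \<noteq> 0" and be: "be \<in> K" "be \<noteq> 0" and ga: "ga \<in> K"
    and eq: "al*B + be*C = A + ga"
    and cs: "(v A = 0 \<and> v B = 0 \<and> v C = 0) \<or>
      (\<exists>t<0. t \<le> v A \<and> t \<le> v B \<and> t \<le> v C \<and>
          (v A = t \<and> v B = t \<or> v A = t \<and> v C = t \<or> v B = t \<and> v C = t))"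
  shows "tame_trivial v (al*B/A) (be*C/A)"
proof -
  have va: "v (al*B/A) = v B - v A" using nz al vdiv vmult vK by simp
  have vb: "v (be*C/A) = v C - v A" using nz be vdiv vmult vK by simp
  have a0: "al*B/A \<noteq> 0" and b0: "be*C/A \<noteq> 0" using nz al be by auto
  have triv: "tame_trivial v (al*B/A) (be*C/A)" if "v A = v B" "v A = v C"
  proof -
    have "tame_elt v (al*B/A) (be*C/A) = 1" unfolding tame_elt_def using va vb that by simp
    then show ?thesis using U_tame U_one by simp
  qed
  from cs show ?thesis
  proof
    assume "v A = 0 \<and> v B = 0 \<and> v C = 0" then show ?thesis using triv by simp
  next
    assume "\<exists>t<0. t \<le> v A \<and> t \<le> v B \<and> t \<le> v C \<and>
          (v A = t \<and> v B = t \<or> v A = t \<and> v C = t \<or> v B = t \<and> v C = t)"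
    then obtain t where t: "t < 0" "t \<le> v A" "t \<le> v B" "t \<le> v C"
      and h: "v A = t \<and> v B = t \<or> v A = t \<and> v C = t \<or> v B = t \<and> v C = t" by blast
    have gaV: "VG (t+1) ga" using VG_mono[OF _ VG_K[OF ga]] t by simp
    show ?thesis
    proof (cases "v A = t \<and> v B = t \<and> v C = t")
      case True then show ?thesis using triv by simp
    next
      case False
      note F = False
      show ?thesis
      proof (cases "v A = t \<and> v B = t")
        case True
        then have vc: "v C > t" using F t by auto
        have "VG (0 + v C) (be * C)" using VG_mult[OF VG_K[OF be(1)] VG_v] .
        then have "VG (t+1) (be*C)" using VG_mono[of "t+1" "v C"] vc by simp
        then have p: "VG (t+1) (ga - be*C)" using gaV VG_diff by blast
        have "al*B/A - 1 = (ga - be*C)/A" using nz eq by (simp add: field_simps)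
        then have u: "U (al*B/A)" using U_crit[OF a0 nz(1) _ p] True by simp
        have "tame_elt v (al*B/A) (be*C/A) = (al*B/A) powi (v (be*C/A))"
          unfolding tame_elt_def using va True by simp
        then show ?thesis using U_tame U_powi[OF u] by simp
      next
        case False
        note F2 = False
        show ?thesis
        proof (cases "v A = t \<and> v C = t")
          case True
          then have vc: "v B > t" using F t by auto
          have "VG (0 + v B) (al * B)" using VG_mult[OF VG_K[OF al(1)] VG_v] .
          then have "VG (t+1) (al*B)" using VG_mono[of "t+1" "v B"] vc by simp
          then have p: "VG (t+1) (ga - al*B)" using gaV VG_diff by blast
          have "be*C/A - 1 = (ga - al*B)/A" using nz eq by (simp add: field_simps)
          then have u: "U (be*C/A)" using U_crit[OF b0 nz(1) _ p] True by simp
          have "tame_elt v (al*B/A) (be*C/A) = inverse ((be*C/A) powi (v (al*B/A)))"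
            unfolding tame_elt_def using vb True by (simp add: divide_inverse)
          then show ?thesis using U_tame U_inv[OF U_powi[OF u]] by simp
        next
          case False
          then have hB: "v B = t" "v C = t" and vA: "v A > t" using h F2 F t by auto
          define n where "n = t - v A"
          have vab: "v (al*B/A) = n" "v (be*C/A) = n" using va vb hB n_def by auto
          have bc0: "be * C \<noteq> 0" using be nz by simp
          have vbc: "v (be*C) = t" using vmult be nz vK hB by simp
          have "VG (t+1) A" using VG_mono[OF _ VG_v[of A]] vA by simp
          then have p: "VG (t+1) (-(A + ga))" using gaV VG_add VG_neg by blast
          have "-((al*B/A) / (be*C/A)) - 1 = (-(A + ga)) / (be*C)" using nz be eq
            by (simp add: field_simps)
          then have u: "U (-((al*B/A) / (be*C/A)))"
            using U_crit[OF _ bc0 _ p] vbc a0 b0 by simp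
          have "tame_elt v (al*B/A) (be*C/A) = (-((al*B/A) / (be*C/A))) powi n"
            unfolding tame_elt_def vab
            by (cases "even n") (simp_all add: power_int_minus_left power_int_divide_distrib)
          then show ?thesis using U_tame U_powi[OF u] by simp
        qed
      qed
    qed
  qed
qed

end

theorem lemma2p2:
  fixes K :: "'a::field set" and x y lam :: 'a
    and N :: nat and Ns :: "nat \<Rightarrow> nat"
    and a b :: "nat \<Rightarrow> 'a" and c :: "nat \<Rightarrow> nat \<Rightarrow> 'a"
    and L :: "nat \<Rightarrow> nat \<Rightarrow> 'a" and br :: "nat \<Rightarrow> nat \<Rightarrow> 'a"
  assumes K: "subfield K"
    and gen: "generated_by K x y"
    and trans: "transcendental_over K x"
    and N: "N \<ge> 2"
    and Ns: "\<And>i. i \<in> {1..N} \<Longrightarrow> Ns i \<ge> 1"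
    and abK: "\<And>i. i \<in> {1..N} \<Longrightarrow> a i \<in> K \<and> b i \<in> K \<and> (a i, b i) \<noteq> (0, 0)"
    and cK: "\<And>i j. i \<in> {1..N} \<Longrightarrow> j \<in> {1..Ns i} \<Longrightarrow> c i j \<in> K"
    and distinct: "\<And>i j i' j'. i \<in> {1..N} \<Longrightarrow> j \<in> {1..Ns i} \<Longrightarrow>
        i' \<in> {1..N} \<Longrightarrow> j' \<in> {1..Ns i'} \<Longrightarrow> (i, j) \<noteq> (i', j') \<Longrightarrow>
        {(u, w). u \<in> K \<and> w \<in> K \<and> a i * u + b i * w + c i j = 0} \<noteq>
        {(u, w). u \<in> K \<and> w \<in> K \<and> a i' * u + b i' * w + c i' j' = 0}"
    and br_def: "\<And>i k. br i k = a i * b k - a k * b i"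
    and br_nz: "\<And>i k. i \<in> {1..N} \<Longrightarrow> k \<in> {1..N} \<Longrightarrow> i \<noteq> k \<Longrightarrow> br i k \<noteq> 0"
    and lamK: "lam \<in> K" and lam_nz: "lam \<noteq> 0"
    and L_def: "\<And>i j. L i j = a i * x + b i * y + c i j"
    and curve: "lam * (\<Prod>i\<in>{1..N}. \<Prod>j\<in>{1..Ns i}. L i j) - 1 = 0"
  shows "(\<forall>i j k l m n. i \<in> {1..N} \<and> l \<in> {1..N} \<and> i \<noteq> l \<and>
            j \<in> {1..Ns i} \<and> k \<in> {1..Ns i} \<and> m \<in> {1..Ns l} \<and> n \<in> {1..Ns l} \<longrightarrow>
            symbol_in_K2T K (L i j / L i k) (L l m / L l n))
       \<and> (\<forall>i j k l m n. i \<in> {1..N} \<and> k \<in> {1..N} \<and> m \<in> {1..N} \<and>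
            i \<noteq> k \<and> i \<noteq> m \<and> k \<noteq> m \<and>
            j \<in> {1..Ns i} \<and> l \<in> {1..Ns k} \<and> n \<in> {1..Ns m} \<longrightarrow>
            symbol_in_K2T K (br i m / br k m * L k l / L i j)
                            (br i k / br m k * L m n / L i j))"
proof -
  have P0: "(\<Prod>i\<in>{1..N}. \<Prod>j\<in>{1..Ns i}. L i j) \<noteq> 0"
    using curve by (metis mult_zero_right right_minus_eq zero_neq_one)
  have Lnz: "\<And>i j. i \<in> {1..N} \<Longrightarrow> j \<in> {1..Ns i} \<Longrightarrow> L i j \<noteq> 0"
    using P0 by (auto simp: prod_zero_iff)
  have brK: "\<And>i k. i \<in> {1..N} \<Longrightarrow> k \<in> {1..N} \<Longrightarrow> br i k \<in> K"
    using abK br_def sK_mult[OF K] sK_diff[OF K] by metis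
  have key: "(\<forall>i\<in>{1..N}. \<forall>j\<in>{1..Ns i}. v (L i j) = 0) \<or>
     (\<exists>t<0. (\<forall>i\<in>{1..N}. \<forall>j\<in>{1..Ns i}. t \<le> v (L i j)) \<and>
        (\<forall>i k j l. i \<in> {1..N} \<longrightarrow> k \<in> {1..N} \<longrightarrow> i \<noteq> k \<longrightarrow> j \<in> {1..Ns i} \<longrightarrow>
            l \<in> {1..Ns k} \<longrightarrow> v (L i j) = t \<or> v (L k l) = t))"
    if dvv: "discrete_valuation K v" for v
  proof -
    interpret dv K v by unfold_locales (rule dvv)
    have VGq: "VG (s) (q * w)" if "q \<in> K" "VG s w" for q w s
      using VG_mult[OF VG_K[OF that(1)] that(2)] by simp
    have LVG: "VG s (L i j)" if "s \<le> 0" "VG s x" "VG s y" "i \<in> {1..N}" "j \<in> {1..Ns i}" for s i j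
    proof -
      have "VG s (a i * x + b i * y + c i j)"
        using VGq abK that VG_add VG_mono[OF that(1) VG_K[OF cK]] by metis
      then show ?thesis using L_def by simp
    qed
    show ?thesis
    proof (cases "VG 0 x \<and> VG 0 y")
      case True
      have ge: "\<And>i j. i \<in> {1..N} \<Longrightarrow> j \<in> {1..Ns i} \<Longrightarrow> 0 \<le> v (L i j)"
        using LVG True Lnz VG_pos by blast
      have inz: "\<And>i. i \<in> {1..N} \<Longrightarrow> (\<Prod>j\<in>{1..Ns i}. L i j) \<noteq> 0"
        using Lnz by (simp add: prod_zero_iff)
      have "v (lam * (\<Prod>i\<in>{1..N}. \<Prod>j\<in>{1..Ns i}. L i j)) = 0" using curve v1 by simp
      then have "v (\<Prod>i\<in>{1..N}. \<Prod>j\<in>{1..Ns i}. L i j) = 0"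
        using vmult[OF lam_nz P0] vK[OF lamK lam_nz] by simp
      then have S0: "(\<Sum>i\<in>{1..N}. \<Sum>j\<in>{1..Ns i}. v (L i j)) = 0"
        using v_prod[of "{1..N}"] inz v_prod[of "{1..Ns _}"] Lnz by simp
      then have "\<forall>i\<in>{1..N}. (\<Sum>j\<in>{1..Ns i}. v (L i j)) = 0"
      proof -
        have nn: "\<forall>i\<in>{1..N}. 0 \<le> (\<Sum>j\<in>{1..Ns i}. v (L i j))"
        proof
          fix i assume "i \<in> {1..N}"
          then show "0 \<le> (\<Sum>j\<in>{1..Ns i}. v (L i j))" using ge by (meson sum_nonneg)
        qed
        show ?thesis
          using sum_nonneg_eq_0_iff[of "{1..N}" "\<lambda>i. \<Sum>j\<in>{1..Ns i}. v (L i j)"] nn S0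
          by simp
      qed
      then have "\<forall>i\<in>{1..N}. \<forall>j\<in>{1..Ns i}. v (L i j) = 0"
      proof (intro ballI)
        fix i j assume S1: "\<forall>i\<in>{1..N}. (\<Sum>j\<in>{1..Ns i}. v (L i j)) = 0"
          and i: "i \<in> {1..N}" and j: "j \<in> {1..Ns i}"
        have nn: "\<forall>j\<in>{1..Ns i}. 0 \<le> v (L i j)" using ge i by blast
        show "v (L i j) = 0"
          using sum_nonneg_eq_0_iff[of "{1..Ns i}" "\<lambda>j. v (L i j)"] nn S1 i j by simp
      qed
      then show ?thesis by blast
    next
      case False
      have "\<exists>t z. t < 0 \<and> VG t x \<and> VG t y \<and> (z = x \<or> z = y) \<and> z \<noteq> 0 \<and> v z = t"
      proof (cases "x = 0 \<or> y = 0")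
        case True
        then show ?thesis using False
          by (metis (no_types, lifting) VG_def VG_v not_le)
      next
        case nz: False
        show ?thesis
        proof (cases "v x \<le> v y")
          case True
          then show ?thesis using False nz
            by (rule_tac x="v x" in exI, rule_tac x=x in exI) (auto simp: VG_def)
        next
          case c2: False
          then show ?thesis using False nz
            by (rule_tac x="v y" in exI, rule_tac x=y in exI) (auto simp: VG_def)
        qed
      qed
      then obtain t z where t: "t < 0" "VG t x" "VG t y" "z = x \<or> z = y" "z \<noteq> 0" "v z = t"
        by blast
      have ge: "\<And>i j. i \<in> {1..N} \<Longrightarrow> j \<in> {1..Ns i} \<Longrightarrow> t \<le> v (L i j)"
        using LVG t Lnz VG_pos by (meson less_imp_le)
      have F2: "v (L i j) = t \<or> v (L k l) = t"
        if h: "i \<in> {1..N}" "k \<in> {1..N}" "i \<noteq> k" "j \<in> {1..Ns i}" "l \<in> {1..Ns k}" for i k j l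
      proof (rule ccontr)
        assume "\<not> (v (L i j) = t \<or> v (L k l) = t)"
        then have g1: "VG (t+1) (L i j)" and g2: "VG (t+1) (L k l)"
          using ge[OF h(1,4)] ge[OF h(2,5)] unfolding VG_def by auto
        have cv: "VG (t+1) q" if "q \<in> K" for q using VG_mono[OF _ VG_K[OF that]] t(1) by simp
        have cij: "c i j \<in> K" "c k l \<in> K" using cK h by auto
        have ab: "a i \<in> K" "b i \<in> K" "a k \<in> K" "b k \<in> K" using abK h by auto
        have bnz: "br i k \<noteq> 0" using br_nz h by auto
        have vbr: "v (br i k) = 0" using vK[OF brK[OF h(1,2)] bnz] .
        have ex: "br i k * x = b k * L i j - b i * L k l - (b k * c i j - b i * c k l)"
          by (simp add: L_def br_def algebra_simps)
        have ey: "br i k * y = a i * L k l - a k * L i j - (a i * c k l - a k * c i j)"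
          by (simp add: L_def br_def algebra_simps)
        have "VG (t+1) (b k * L i j - b i * L k l - (b k * c i j - b i * c k l))"
          using VG_diff VGq ab g1 g2 cv cij sK_mult[OF K] sK_diff[OF K] by metis
        then have "VG (t+1 - v (br i k)) ((b k * L i j - b i * L k l - (b k * c i j - b i * c k l)) / br i k)"
          using VG_div bnz by blast
        moreover have "x = (b k * L i j - b i * L k l - (b k * c i j - b i * c k l)) / br i k"
          using ex bnz by (simp add: field_simps)
        ultimately have vx: "VG (t+1) x" using vbr by simp
        have "VG (t+1) (a i * L k l - a k * L i j - (a i * c k l - a k * c i j))"
          using VG_diff VGq ab g1 g2 cv cij sK_mult[OF K] sK_diff[OF K] by metis
        then have "VG (t+1 - v (br i k)) ((a i * L k l - a k * L i j - (a i * c k l - a k * c i j)) / br i k)"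
          using VG_div bnz by blast
        moreover have "y = (a i * L k l - a k * L i j - (a i * c k l - a k * c i j)) / br i k"
          using ey bnz by (simp add: field_simps)
        ultimately have vy: "VG (t+1) y" using vbr by simp
        have "t + 1 \<le> v z" using t vx vy VG_pos by blast
        then show False using t by simp
      qed
      show ?thesis using t(1) ge F2 by blast
    qed
  qed
  show ?thesis
  proof (intro conjI allI impI)
    fix i j k l m n
    assume H: "i \<in> {1..N} \<and> l \<in> {1..N} \<and> i \<noteq> l \<and>
            j \<in> {1..Ns i} \<and> k \<in> {1..Ns i} \<and> m \<in> {1..Ns l} \<and> n \<in> {1..Ns l}"
    show "symbol_in_K2T K (L i j / L i k) (L l m / L l n)"
      unfolding symbol_in_K2T_def
    proof (intro allI impI)
      fix v assume dvv: "discrete_valuation K v"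
      interpret dv K v by unfold_locales (rule dvv)
      have dA: "L i j - L i k \<in> K" using L_def sK_diff[OF K] cK H by simp
      have dB: "L l m - L l n \<in> K" using L_def sK_diff[OF K] cK H by simp
      have cs: "(v (L i j) = 0 \<and> v (L i k) = 0 \<and> v (L l m) = 0 \<and> v (L l n) = 0) \<or>
             (\<exists>t<0. (v (L i j) = t \<and> v (L i k) = t) \<or> (v (L l m) = t \<and> v (L l n) = t))"
        using key[OF dvv] H by blast
      show "tame_trivial v (L i j / L i k) (L l m / L l n)"
        by (rule R_lemma[OF _ _ _ _ dA dB cs]) (use Lnz H in auto)
    qed
  next
    fix i j k l m n
    assume H: "i \<in> {1..N} \<and> k \<in> {1..N} \<and> m \<in> {1..N} \<and>
            i \<noteq> k \<and> i \<noteq> m \<and> k \<noteq> m \<and>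
            j \<in> {1..Ns i} \<and> l \<in> {1..Ns k} \<and> n \<in> {1..Ns m}"
    show "symbol_in_K2T K (br i m / br k m * L k l / L i j) (br i k / br m k * L m n / L i j)"
      unfolding symbol_in_K2T_def
    proof (intro allI impI)
      fix v assume dvv: "discrete_valuation K v"
      interpret dv K v by unfold_locales (rule dvv)
      have bnz: "br i m \<noteq> 0" "br k m \<noteq> 0" "br i k \<noteq> 0" "br m k \<noteq> 0" using br_nz H by auto
      have alK: "br i m / br k m \<in> K" and beK: "br i k / br m k \<in> K"
        using sK_div[OF K] brK H by auto
      have gaK: "br i m / br k m * c k l + br i k / br m k * c m n - c i j \<in> K"
        using sK_mult[OF K] sK_add[OF K] sK_diff[OF K] alK beK cK H by meson
      have bkm: "a k * b m - a m * b k \<noteq> 0" and bmk: "a m * b k - a k * b m \<noteq> 0"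
        using bnz br_def by auto
      have eq: "br i m / br k m * L k l + br i k / br m k * L m n =
          L i j + (br i m / br k m * c k l + br i k / br m k * c m n - c i j)"
      proof -
        have p: "br i m * (L k l - c k l) - br i k * (L m n - c m n) = br k m * (L i j - c i j)"
          by (simp add: L_def br_def algebra_simps)
        have bmk_eq: "br m k = - br k m" by (simp add: br_def)
        have h1: "br i m / br k m * L k l + br i k / br m k * L m n =
            (br i m * L k l - br i k * L m n) / br k m"
          using bnz by (simp add: bmk_eq diff_divide_distrib)
        have h2: "L i j + (br i m / br k m * c k l + br i k / br m k * c m n - c i j) =
            (br k m * L i j + br i m * c k l - br i k * c m n - br k m * c i j) / br k m"
          using bnz by (simp add: bmk_eq field_simps)
        have h3: "br i m * L k l - br i k * L m n =
            br k m * L i j + br i m * c k l - br i k * c m n - br k m * c i j"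
          using p by (simp add: algebra_simps)
        show ?thesis using h1 h2 h3 by simp
      qed
      have cs: "(v (L i j) = 0 \<and> v (L k l) = 0 \<and> v (L m n) = 0) \<or>
        (\<exists>t<0. t \<le> v (L i j) \<and> t \<le> v (L k l) \<and> t \<le> v (L m n) \<and>
          (v (L i j) = t \<and> v (L k l) = t \<or> v (L i j) = t \<and> v (L m n) = t \<or> v (L k l) = t \<and> v (L m n) = t))"
      proof -
        from key[OF dvv] show ?thesis
        proof
          assume "\<forall>i\<in>{1..N}. \<forall>j\<in>{1..Ns i}. v (L i j) = 0"
          then show ?thesis using H by blast
        next
          assume "\<exists>t<0. (\<forall>i\<in>{1..N}. \<forall>j\<in>{1..Ns i}. t \<le> v (L i j)) \<and>
            (\<forall>i k j l. i \<in> {1..N} \<longrightarrow> k \<in> {1..N} \<longrightarrow> i \<noteq> k \<longrightarrow> j \<in> {1..Ns i} \<longrightarrow>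
              l \<in> {1..Ns k} \<longrightarrow> v (L i j) = t \<or> v (L k l) = t)"
          then obtain t where t: "t < 0" "\<forall>i\<in>{1..N}. \<forall>j\<in>{1..Ns i}. t \<le> v (L i j)"
            and F: "\<forall>i k j l. i \<in> {1..N} \<longrightarrow> k \<in> {1..N} \<longrightarrow> i \<noteq> k \<longrightarrow> j \<in> {1..Ns i} \<longrightarrow>
              l \<in> {1..Ns k} \<longrightarrow> v (L i j) = t \<or> v (L k l) = t" by blast
          have f1: "v (L i j) = t \<or> v (L k l) = t" using F H by blast
          have f2: "v (L i j) = t \<or> v (L m n) = t" using F H by blast
          have f3: "v (L k l) = t \<or> v (L m n) = t" using F H by blast
          show ?thesis using t f1 f2 f3 H by blast
        qed
      qed
      show "tame_trivial v (br i m / br k m * L k l / L i j) (br i k / br m k * L m n / L i j)"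
        by (rule T_lemma[OF _ _ _ alK _ beK _ gaK eq cs]) (use Lnz H bnz in auto)
    qed
  qed
qed

end
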